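(* Let $b<1$, $\delta\in(0,1)$, $\rho\in(\max\{0,b\},1)$, $R>0$, $R_0>0$, $\kappa\in(0,1)$ and $t\ge0$. Then $$\Big(1-\frac{\kappa}{R}+\xi\Big)^{1-\rho}\Big(1-\Big(\frac{R_0}{R}\Big)^{\delta}\frac{e^{-\delta t}}{\big(1-\frac{\kappa}{R}+\xi\big)^{\delta}}\Big)\ge\Big(1-\Big(\frac{R_0}{R}\Big)^{\delta}e^{-\delta t}\Big)-\Big|\xi-\frac{\kappa}{R}\Big|$$ holds for every $\xi\in\big[\frac{R_0}{R}e^{-t}-1+\frac{\kappa}{R},\frac{\kappa}{R}\big]$. *)

theory Defs
  imports Complex_Main
begin

end

theory Submission
  imports Defs
begin

theorem lemma2p19:
  fixes b \<delta> \<rho> R R\<^sub>0 \<kappa> t \<xi> :: real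
  assumes "b < 1"
    and "0 < \<delta>" "\<delta> < 1"
    and "max 0 b < \<rho>" "\<rho> < 1"
    and "R > 0" "R\<^sub>0 > 0"
    and "0 < \<kappa>" "\<kappa> < 1"
    and "t \<ge> 0"
    and "R\<^sub>0 / R * exp (- t) - 1 + \<kappa> / R \<le> \<xi>" "\<xi> \<le> \<kappa> / R"
  shows "(1 - \<kappa> / R + \<xi>) powr (1 - \<rho>) *
           (1 - (R\<^sub>0 / R) powr \<delta> * exp (- \<delta> * t) / (1 - \<kappa> / R + \<xi>) powr \<delta>)
         \<ge> (1 - (R\<^sub>0 / R) powr \<delta> * exp (- \<delta> * t)) - \<bar>\<xi> - \<kappa> / R\<bar>"
proof -
  define x where "x = 1 - \<kappa> / R + \<xi>"
  define a where "a = R\<^sub>0 / R * exp (- t)"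
  have a0: "a > 0" using assms unfolding a_def by simp
  have ax: "a \<le> x" using assms unfolding a_def x_def by simp
  have x1: "x \<le> 1" using assms unfolding x_def by simp
  have x0: "x > 0" using a0 ax by simp
  have c: "(R\<^sub>0 / R) powr \<delta> * exp (- \<delta> * t) = a powr \<delta>"
  proof -
    have "a powr \<delta> = (R\<^sub>0 / R) powr \<delta> * exp (- t) powr \<delta>"
      unfolding a_def using assms by (simp add: powr_mult[symmetric] del: powr_mult)
    also have "exp (- t) powr \<delta> = exp (- \<delta> * t)" by (simp add: powr_def)
    finally show ?thesis by simp
  qed
  have abs: "\<bar>\<xi> - \<kappa> / R\<bar> = 1 - x" using assms unfolding x_def by simp
  define y where "y = a powr \<delta> / x powr \<delta>"
  have y1: "y \<le> 1" unfolding y_def using powr_mono2[of \<delta> a x] a0 ax x0 assms by simp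
  have y0: "y \<ge> 0" unfolding y_def by simp
  have xr: "x powr (1 - \<rho>) \<ge> x" using powr_mono'[of "1-\<rho>" 1 x] x0 x1 assms by simp
  have xd: "x powr \<delta> \<ge> x" using powr_mono'[of "\<delta>" 1 x] x0 x1 assms by simp
  have "x powr (1 - \<rho>) * (1 - y) \<ge> x * (1 - y)" using xr y1 by (simp add: mult_right_mono)
  moreover have "x * (1 - y) \<ge> x - y * x powr \<delta>" using mult_left_mono[OF xd y0] by (simp add: algebra_simps)
  moreover have "y * x powr \<delta> = a powr \<delta>" unfolding y_def using x0 by simp
  ultimately show ?thesis unfolding c abs x_def[symmetric] y_def by simp
qed

end
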